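(* Let $G=(V,E)$ be a finite undirected graph, let $k>2$ be an integer, let $C$ be a legitimate configuration (as defined in the context), and let $s\in S(C)$. Then for every node $u\in V$ with $\mathrm{dist}(u,s)\le\lfloor k/2\rfloor$, we have $d_u=\mathrm{dist}(u,s)$.
   Context: $\mathrm{dist}$ is the graph distance in $G$ and $N(u)$ the neighbourhood of $u$. Let $m=\lfloor k/2\rfloor$. A configuration $C$ assigns to each node $u$ the values $d_u\in\{0,\dots,k-1\}$, $err_u\in\{0,1\}$, and for each $i\in\{1,\dots,m-1\}$ a clock value $c_{i,u}\in\mathbb{Z}/4\mathbb{Z}$ and an arrow $b_{i,u}\in\{\uparrow,\downarrow\}$. Let $S(C)=\{u\in V: d_u=0\}$. Predicates on a node $u$: - $\mathrm{well\_defined}(u)$: $err_u=0$, $|d_u-d_v|\le 1$ for all $v\in N(u)$, and if $d_u>0$ then some $v\in N(u)$ has $d_v=d_u-1$. - $\mathrm{leader\_down}(u)$: if $d_u=0$ then $b_{i,u}=\downarrow$ for all $i\in\{1,\dots,m-1\}$. - $\mathrm{bc\_up}(u,i)$: for every $v\in N(u)$ with $d_v=d_u-1$, $(b_{i,u},b_{i,v},c_{i,v})\in\{(\uparrow,\uparrow,c_{i,u}),(\uparrow,\downarrow,c_{i,u}),(\uparrow,\downarrow,c_{i,u}+1),(\downarrow,\downarrow,c_{i,u})\}$. - $\mathrm{bc\_down}(u,i)$: for every $v\in N(u)$ with $d_v=d_u+1$, $(b_{i,u},b_{i,v},c_{i,v})\in\{(\uparrow,\uparrow,c_{i,u}),(\downarrow,\uparrow,c_{i,u}),(\downarrow,\uparrow,c_{i,u}-1),(\downarrow,\downarrow,c_{i,u})\}$.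 - $\mathrm{branch\_coherence}(u)$: either $d_u\ge m$, or ($\mathrm{bc\_up}(u,d_u)$ holds, and $\mathrm{bc\_up}(u,i)$ and $\mathrm{bc\_down}(u,i)$ hold for all $i\in\{d_u+1,\dots,m-1\}$). (For $d_u=0$ the condition $\mathrm{bc\_up}(u,0)$ is vacuous.) Clock arithmetic is in $\mathbb{Z}/4\mathbb{Z}$. A configuration $C$ is legitimate if every node $u$ satisfies $\mathrm{well\_defined}(u)$, $\mathrm{leader\_down}(u)$ and $\mathrm{branch\_coherence}(u)$, and any two distinct nodes of $S(C)$ are at distance at least $k$ in $G$. *)

theory Defs
  imports Main "HOL-Library.Extended_Nat" "HOL-Library.Numeral_Type"
begin

definition undirected_graph :: "'v set \<Rightarrow> ('v \<Rightarrow> 'v \<Rightarrow> bool) \<Rightarrow> bool" where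
  "undirected_graph V E \<longleftrightarrow> finite V \<and> (\<forall>u v. E u v \<longrightarrow> u \<in> V \<and> v \<in> V)
     \<and> (\<forall>u v. E u v \<longrightarrow> E v u) \<and> (\<forall>u. \<not> E u u)"

definition nbhd :: "'v set \<Rightarrow> ('v \<Rightarrow> 'v \<Rightarrow> bool) \<Rightarrow> 'v \<Rightarrow> 'v set" where
  "nbhd V E u = {v \<in> V. E u v}"

definition gdist :: "'v set \<Rightarrow> ('v \<Rightarrow> 'v \<Rightarrow> bool) \<Rightarrow> 'v \<Rightarrow> 'v \<Rightarrow> enat" where
  "gdist V E u v = Inf {enat (length xs - 1) | xs. xs \<noteq> [] \<and> hd xs = u \<and> last xs = v
      \<and> set xs \<subseteq> V \<and> (\<forall>i. i + 1 < length xs \<longrightarrow> E (xs ! i) (xs ! (i + 1)))}"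

datatype arrow = Up | Down

text \<open>Configuration: d, err, clocks c i u in Z/4Z (type 4), arrows b i u.\<close>
record 'v config =
  d :: "'v \<Rightarrow> nat"
  err :: "'v \<Rightarrow> nat"
  clk :: "nat \<Rightarrow> 'v \<Rightarrow> 4"
  arr :: "nat \<Rightarrow> 'v \<Rightarrow> arrow"

definition config_range :: "nat \<Rightarrow> 'v set \<Rightarrow> 'v config \<Rightarrow> bool" where
  "config_range k V C \<longleftrightarrow> (\<forall>u\<in>V. d C u < k \<and> err C u \<le> 1)"

definition S_set :: "'v set \<Rightarrow> 'v config \<Rightarrow> 'v set" where
  "S_set V C = {u \<in> V. d C u = 0}"

definition well_defined :: "'v set \<Rightarrow> ('v \<Rightarrow> 'v \<Rightarrow> bool) \<Rightarrow> 'v config \<Rightarrow> 'v \<Rightarrow> bool" where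
  "well_defined V E C u \<longleftrightarrow> err C u = 0
     \<and> (\<forall>v\<in>nbhd V E u. \<bar>int (d C u) - int (d C v)\<bar> \<le> 1)
     \<and> (d C u > 0 \<longrightarrow> (\<exists>v\<in>nbhd V E u. d C v + 1 = d C u))"

definition leader_down :: "nat \<Rightarrow> 'v config \<Rightarrow> 'v \<Rightarrow> bool" where
  "leader_down k C u \<longleftrightarrow> (d C u = 0 \<longrightarrow> (\<forall>i\<in>{1..<k div 2}. arr C i u = Down))"

definition bc_up :: "'v set \<Rightarrow> ('v \<Rightarrow> 'v \<Rightarrow> bool) \<Rightarrow> 'v config \<Rightarrow> 'v \<Rightarrow> nat \<Rightarrow> bool" where
  "bc_up V E C u i \<longleftrightarrow> (\<forall>v\<in>nbhd V E u. d C v + 1 = d C u \<longrightarrow>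
     (arr C i u, arr C i v, clk C i v) \<in>
       {(Up, Up, clk C i u), (Up, Down, clk C i u), (Up, Down, clk C i u + 1), (Down, Down, clk C i u)})"

definition bc_down :: "'v set \<Rightarrow> ('v \<Rightarrow> 'v \<Rightarrow> bool) \<Rightarrow> 'v config \<Rightarrow> 'v \<Rightarrow> nat \<Rightarrow> bool" where
  "bc_down V E C u i \<longleftrightarrow> (\<forall>v\<in>nbhd V E u. d C v = d C u + 1 \<longrightarrow>
     (arr C i u, arr C i v, clk C i v) \<in>
       {(Up, Up, clk C i u), (Down, Up, clk C i u), (Down, Up, clk C i u - 1), (Down, Down, clk C i u)})"

definition branch_coherence :: "nat \<Rightarrow> 'v set \<Rightarrow> ('v \<Rightarrow> 'v \<Rightarrow> bool) \<Rightarrow> 'v config \<Rightarrow> 'v \<Rightarrow> bool" where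
  "branch_coherence k V E C u \<longleftrightarrow> d C u \<ge> k div 2 \<or>
     (bc_up V E C u (d C u) \<and>
      (\<forall>i\<in>{d C u + 1..<k div 2}. bc_up V E C u i \<and> bc_down V E C u i))"

definition legitimate :: "nat \<Rightarrow> 'v set \<Rightarrow> ('v \<Rightarrow> 'v \<Rightarrow> bool) \<Rightarrow> 'v config \<Rightarrow> bool" where
  "legitimate k V E C \<longleftrightarrow> config_range k V C \<and>
     (\<forall>u\<in>V. well_defined V E C u \<and> leader_down k C u \<and> branch_coherence k V E C u) \<and>
     (\<forall>s\<in>S_set V C. \<forall>t\<in>S_set V C. s \<noteq> t \<longrightarrow> gdist V E s t \<ge> enat k)"

end

theory Submission
  imports Defs
begin

definition walk :: "'v set \<Rightarrow> ('v \<Rightarrow> 'v \<Rightarrow> bool) \<Rightarrow> 'v \<Rightarrow> 'v \<Rightarrow> 'v list \<Rightarrow> bool" where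
  "walk V E u v xs \<longleftrightarrow> xs \<noteq> [] \<and> hd xs = u \<and> last xs = v \<and> set xs \<subseteq> V \<and> successively E xs"

lemma gdist_alt: "gdist V E u v = Inf {enat (length xs - 1) | xs. walk V E u v xs}"
  unfolding gdist_def walk_def successively_conv_nth by simp

lemma walk_le: "walk V E u v xs \<Longrightarrow> gdist V E u v \<le> enat (length xs - 1)"
  unfolding gdist_alt by (rule Inf_lower) blast

lemma gdist_obtain:
  assumes "gdist V E u v = enat n"
  shows "\<exists>xs. walk V E u v xs \<and> length xs - 1 = n"
proof -
  let ?A = "{enat (length xs - 1) | xs. walk V E u v xs}"
  have "?A \<noteq> {}"
  proof
    assume "?A = {}"
    then have "gdist V E u v = \<infinity>" unfolding gdist_alt by (simp add: Inf_enat_def)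
    with assms show False by simp
  qed
  then obtain a where "a \<in> ?A" by blast
  then have "Inf ?A \<in> ?A" by (rule wellorder_InfI)
  then show ?thesis using assms unfolding gdist_alt by auto
qed

lemma walk_rev:
  assumes "undirected_graph V E" "walk V E u v xs"
  shows "walk V E v u (rev xs)"
proof -
  have "successively E xs" using assms(2) unfolding walk_def by simp
  then have "successively (\<lambda>x y. E y x) xs"
    by (rule successively_mono) (use assms(1) in \<open>auto simp: undirected_graph_def\<close>)
  then show ?thesis using assms(2) by (auto simp: walk_def hd_rev last_rev)
qed

lemma walk_append:
  assumes "walk V E u v xs" "walk V E v w ys"
  shows "walk V E u w (xs @ tl ys) \<and> length (xs @ tl ys) - 1 = (length xs - 1) + (length ys - 1)"
proof -
  obtain y ys' where ys: "ys = y # ys'" using assms(2) unfolding walk_def by (cases ys) auto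
  have "y = v" using assms(2) ys by (simp add: walk_def)
  have "successively E (xs @ ys')"
    using assms ys \<open>y = v\<close> unfolding walk_def
    by (auto simp: successively_append_iff successively_Cons)
  moreover have "length (xs @ tl ys) - 1 = (length xs - 1) + (length ys - 1)"
    using assms ys by (cases xs) (auto simp: walk_def)
  ultimately show ?thesis using assms ys \<open>y = v\<close> unfolding walk_def
    by (auto simp: last_append)
qed

lemma walk_lip:
  assumes "\<And>x y. E x y \<Longrightarrow> x \<in> V \<Longrightarrow> y \<in> V \<Longrightarrow> f x \<le> f y + (1::nat)"
  shows "walk V E u v xs \<Longrightarrow> f u \<le> f v + (length xs - 1)"
proof (induction xs arbitrary: u)
  case Nil then show ?case by (simp add: walk_def)
next
  case (Cons x xs)
  show ?case
  proof (cases xs)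
    case Nil then show ?thesis using Cons.prems by (auto simp: walk_def)
  next
    case (Cons y ys)
    have w: "walk V E y v xs" using Cons.prems Cons by (auto simp: walk_def)
    have "E u y" "u \<in> V" "y \<in> V" using Cons.prems Cons by (auto simp: walk_def)
    then have "f u \<le> f y + 1" using assms by blast
    moreover have "f y \<le> f v + (length xs - 1)" using Cons.IH w by blast
    ultimately show ?thesis using Cons by simp
  qed
qed

lemma descent:
  assumes "\<forall>w\<in>V. well_defined V E C w"
  shows "w \<in> V \<Longrightarrow> d C w = n \<Longrightarrow> \<exists>t xs. walk V E w t xs \<and> length xs - 1 = n \<and> d C t = 0"
proof (induction n arbitrary: w)
  case 0
  then have "walk V E w w [w]" by (simp add: walk_def)
  then show ?case using 0 by force
next
  case (Suc n)
  then obtain v where v: "v \<in> nbhd V E w" "d C v + 1 = d C w"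
    using assms unfolding well_defined_def by fastforce
  then have "v \<in> V" "E w v" by (auto simp: nbhd_def)
  then obtain t xs where "walk V E v t xs" "length xs - 1 = n" "d C t = 0"
    using Suc v by fastforce
  moreover have "walk V E w v [w, v]" using \<open>v \<in> V\<close> \<open>E w v\<close> Suc.prems by (simp add: walk_def)
  ultimately show ?case using walk_append[of V E w v "[w,v]" t xs] by force
qed

theorem lemma2:
  fixes V :: "'v set" and E :: "'v \<Rightarrow> 'v \<Rightarrow> bool" and k :: nat and C :: "'v config"
  assumes "undirected_graph V E"
    and "k > 2"
    and "legitimate k V E C"
    and "s \<in> S_set V C"
    and "u \<in> V"
    and "gdist V E u s \<le> enat (k div 2)"
  shows "enat (d C u) = gdist V E u s"
proof -
  have wd: "\<forall>w\<in>V. well_defined V E C w" using assms(3) by (simp add: legitimate_def)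
  have ds: "d C s = 0" "s \<in> V" using assms(4) by (auto simp: S_set_def)
  obtain g where g: "gdist V E u s = enat g" "g \<le> k div 2"
    using assms(6) by (cases "gdist V E u s") auto
  obtain p where p: "walk V E u s p" "length p - 1 = g" using gdist_obtain[OF g(1)] by blast
  have lip: "d C x \<le> d C y + 1" if "E x y" "x \<in> V" "y \<in> V" for x y
  proof -
    have "y \<in> nbhd V E x" using that by (simp add: nbhd_def)
    then show ?thesis using wd that(2) unfolding well_defined_def by fastforce
  qed
  have up: "d C u \<le> g" using walk_lip[of E V "d C", OF lip p(1)] p(2) ds by simp
  have lo: "g \<le> d C u"
  proof (rule ccontr)
    assume less: "\<not> g \<le> d C u"
    obtain t xs where t: "walk V E u t xs" "length xs - 1 = d C u" "d C t = 0"
      using descent[OF wd assms(5) refl] by blast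
    have "t \<in> V" using t(1) by (auto simp: walk_def)
    have ws: "walk V E s u (rev p)" using walk_rev[OF assms(1) p(1)] .
    from walk_append[OF ws t(1)] obtain q where q: "walk V E s t q" "length q - 1 = g + d C u"
      using p(2) t(2) by auto
    have "gdist V E s t \<le> enat (g + d C u)" using walk_le[OF q(1)] q(2) by simp
    moreover have "g + d C u < k" using less g(2) by linarith
    ultimately have "gdist V E s t < enat k" by (meson enat_ord_simps(2) order_le_less_trans)
    moreover have "s \<noteq> t"
    proof
      assume "s = t"
      then have "gdist V E u s \<le> enat (d C u)" using walk_le[OF t(1)] t(2) by simp
      then show False using less g(1) by simp
    qed
    ultimately show False
      using assms(3) assms(4) \<open>t \<in> V\<close> t(3) unfolding legitimate_def S_set_def by fastforce
  qed
  show ?thesis using up lo g(1) by simp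
qed

end
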